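(* Let $\mu$ be a probability distribution on $\mathbb{R}_+$. Suppose that for every $c>0$ there is a probability distribution $\rho_c$ whose support is contained in $[0,c]$ and such that $\rho_c*\mu\in\mathcal{S}_{loc}$. Then $\mu\in\mathcal{S}_{loc}$.
   Context: For positive functions $f,g$ defined on some $[a,\infty)$, $f(x)\sim g(x)$ means $\lim_{x\to\infty}f(x)/g(x)=1$. $\eta*\rho$ denotes convolution of measures. The class $\mathbf{L}$ consists of nonnegative measurable $g$ on $\mathbb{R}$ with $g(x)>0$ for all sufficiently large $x$ and $g(x+a)\sim g(x)$ for every $a\in\mathbb{R}$. For $\Delta=(0,c]$, $c>0$: a distribution $\rho$ belongs to $\mathcal{L}_\Delta$ if $x\mapsto\rho((x,x+c])$ belongs to $\mathbf{L}$, and to $\mathcal{S}_\Delta$ if moreover $\rho*\rho((x,x+c])\sim 2\rho((x,x+c])$. $\mathcal{S}_{loc}$ is the class of distributions belonging to $\mathcal{S}_\Delta$ for every $\Delta=(0,c]$, $c>0$. *)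

theory Defs
  imports "HOL-Probability.Probability"
begin

definition is_distr :: "real measure \<Rightarrow> bool" where
  "is_distr M \<longleftrightarrow> prob_space M \<and> sets M = sets borel"

definition class_L :: "(real \<Rightarrow> real) \<Rightarrow> bool" where
  "class_L g \<longleftrightarrow> g \<in> borel_measurable borel \<and> (\<forall>x. 0 \<le> g x)
     \<and> eventually (\<lambda>x. 0 < g x) at_top
     \<and> (\<forall>a. ((\<lambda>x. g (x + a) / g x) \<longlongrightarrow> 1) at_top)"

definition L_Delta :: "real \<Rightarrow> real measure \<Rightarrow> bool" where
  "L_Delta c \<rho> \<longleftrightarrow> class_L (\<lambda>x. measure \<rho> {x<..x + c})"

definition S_Delta :: "real \<Rightarrow> real measure \<Rightarrow> bool" where
  "S_Delta c \<rho> \<longleftrightarrow> L_Delta c \<rho> \<and>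
     ((\<lambda>x. measure (\<rho> \<star> \<rho>) {x<..x + c} / (2 * measure \<rho> {x<..x + c})) \<longlongrightarrow> 1) at_top"

definition S_loc :: "real measure \<Rightarrow> bool" where
  "S_loc \<rho> \<longleftrightarrow> (\<forall>c>0. S_Delta c \<rho>)"

end

theory Submission
  imports Defs
begin

lemma pp: assumes "is_distr M" "is_distr N" shows "pair_prob_space M N"
  using assms unfolding is_distr_def
  by (simp add: pair_prob_space.intro pair_sigma_finite.intro prob_space_imp_sigma_finite)

lemma conv_distr: assumes "is_distr M" "is_distr N" shows "is_distr (M \<star> N)"
proof -
  interpret P: pair_prob_space M N using pp[OF assms] .
  have sM: "sets M = sets borel" and sN: "sets N = sets borel" using assms by (auto simp: is_distr_def)
  have m: "(\<lambda>(x,y). x + y) \<in> measurable (M \<Otimes>\<^sub>M N) (borel :: real measure)"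
    unfolding measurable_cong_sets[OF sets_pair_measure_cong[OF sM sN] refl] by measurable
  show ?thesis unfolding is_distr_def convolution_def
    using P.prob_space_distr[OF m] by simp
qed

lemma conv_measure: assumes "is_distr M" "is_distr N" "B \<in> sets borel"
  shows "measure (M \<star> N) B = measure (M \<Otimes>\<^sub>M N) {p. fst p + snd p \<in> B}"
proof -
  have sM: "sets M = sets borel" and sN: "sets N = sets borel" using assms by (auto simp: is_distr_def)
  have m: "(\<lambda>(x,y). x + y) \<in> measurable (M \<Otimes>\<^sub>M N) (borel :: real measure)"
    unfolding measurable_cong_sets[OF sets_pair_measure_cong[OF sM sN] refl] by measurable
  show ?thesis unfolding convolution_def
    using measure_distr[OF m, of B] assms(3)
    by (simp add: space_pair_measure vimage_def case_prod_beta sets_eq_imp_space_eq[OF sM] sets_eq_imp_space_eq[OF sN])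
qed

lemma conv_sets: assumes "is_distr M" "is_distr N" "B \<in> sets borel"
  shows "{p. fst p + snd p \<in> B} \<in> sets (M \<Otimes>\<^sub>M N)"
proof -
  have sM: "sets M = sets borel" and sN: "sets N = sets borel" using assms by (auto simp: is_distr_def)
  have m: "(\<lambda>p. fst p + snd p) \<in> measurable (M \<Otimes>\<^sub>M N) (borel :: real measure)"
    unfolding measurable_cong_sets[OF sets_pair_measure_cong[OF sM sN] refl] by measurable
  from measurable_sets[OF m assms(3)] show ?thesis by (simp add: space_pair_measure vimage_def sets_eq_imp_space_eq[OF sM] sets_eq_imp_space_eq[OF sN])
qed

lemma rect: assumes "is_distr M" "is_distr N" "A \<in> sets borel" "B \<in> sets borel"
  shows "measure (M \<Otimes>\<^sub>M N) (A \<times> B) = measure M A * measure N B"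
proof -
  interpret P: pair_prob_space M N using pp[OF assms(1,2)] .
  have sM: "sets M = sets borel" and sN: "sets N = sets borel" using assms by (auto simp: is_distr_def)
  show ?thesis unfolding measure_def
    using P.M2.emeasure_pair_measure_Times[of A M B] assms sM sN
    by (simp add: enn2real_mult)
qed

lemma conv_lower: assumes "is_distr \<rho>" "is_distr \<sigma>" "measure \<rho> {0..c} = 1"
  "D \<in> sets borel" "B \<in> sets borel" "\<And>u v. 0 \<le> u \<Longrightarrow> u \<le> c \<Longrightarrow> v \<in> D \<Longrightarrow> u + v \<in> B"
  shows "measure \<sigma> D \<le> measure (\<rho> \<star> \<sigma>) B"
proof -
  interpret P: pair_prob_space \<rho> \<sigma> using pp[OF assms(1,2)] .
  have sM: "sets \<rho> = sets borel" and sN: "sets \<sigma> = sets borel" using assms by (auto simp: is_distr_def)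
  have "measure \<sigma> D = measure (\<rho> \<Otimes>\<^sub>M \<sigma>) ({0..c} \<times> D)"
    using rect[OF assms(1,2), of "{0..c}" D] assms(3,4) by simp
  also have "\<dots> \<le> measure (\<rho> \<Otimes>\<^sub>M \<sigma>) {p. fst p + snd p \<in> B}"
    apply (rule P.finite_measure_mono)
    using assms(6) conv_sets[OF assms(1,2,5)] by auto
  also have "\<dots> = measure (\<rho> \<star> \<sigma>) B" using conv_measure[OF assms(1,2,5)] by simp
  finally show ?thesis .
qed

lemma conv_upper: assumes "is_distr \<rho>" "is_distr \<sigma>" "measure \<rho> {0..c} = 1"
  "D \<in> sets borel" "B \<in> sets borel" "\<And>u v. 0 \<le> u \<Longrightarrow> u \<le> c \<Longrightarrow> u + v \<in> B \<Longrightarrow> v \<in> D"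
  shows "measure (\<rho> \<star> \<sigma>) B \<le> measure \<sigma> D"
proof -
  interpret P: pair_prob_space \<rho> \<sigma> using pp[OF assms(1,2)] .
  have sM: "sets \<rho> = sets borel" and sN: "sets \<sigma> = sets borel" using assms by (auto simp: is_distr_def)
  have c0: "measure \<rho> (- {0..c}) = 0"
    using P.M1.prob_compl[of "{0..c}"] assms(3) sM sets_eq_imp_space_eq[OF sM] by (simp add: Compl_eq_Diff_UNIV)
  have "measure (\<rho> \<star> \<sigma>) B = measure (\<rho> \<Otimes>\<^sub>M \<sigma>) {p. fst p + snd p \<in> B}"
    using conv_measure[OF assms(1,2,5)] by simp
  also have "\<dots> \<le> measure (\<rho> \<Otimes>\<^sub>M \<sigma>) (({0..c} \<times> D) \<union> ((- {0..c}) \<times> UNIV))"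
    apply (rule P.finite_measure_mono)
    using assms(6) assms(4) sM sN by (auto simp: sets_pair_measure_cong[OF sM sN])
  also have "\<dots> \<le> measure (\<rho> \<Otimes>\<^sub>M \<sigma>) ({0..c} \<times> D) + measure (\<rho> \<Otimes>\<^sub>M \<sigma>) ((- {0..c}) \<times> UNIV)"
    apply (rule measure_subadditive)
    using assms(4) by (auto simp: sets_pair_measure_cong[OF sM sN] P.emeasure_eq_measure)
  also have "\<dots> = measure \<sigma> D"
    using rect[OF assms(1,2), of "{0..c}" D] rect[OF assms(1,2), of "(- {0..c})" UNIV] assms(3,4) c0 by simp
  finally show ?thesis .
qed

lemma conv_self_lower:
  assumes "is_distr \<mu>" "c > 0" "T \<ge> c" "x \<ge> 2 * real M * c"
  shows "2 * (\<Sum>k<M. measure \<mu> {real k * c..<real (Suc k) * c} * measure \<mu> {x - real k * c<..x - real k * c + (T - c)})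
     \<le> measure (\<mu> \<star> \<mu>) {x<..x+T}"
proof -
  interpret P: pair_prob_space \<mu> \<mu> using pp[OF assms(1,1)] .
  have sM: "sets \<mu> = sets borel" using assms by (auto simp: is_distr_def)
  define J where "J k = {real k * c..<real (Suc k) * c}" for k :: nat
  define K where "K k = {x - real k * c<..x - real k * c + (T - c)}" for k :: nat
  define A where "A k = K k \<times> J k" for k
  define B where "B k = J k \<times> K k" for k
  have sA: "A k \<in> sets (\<mu> \<Otimes>\<^sub>M \<mu>)" "B k \<in> sets (\<mu> \<Otimes>\<^sub>M \<mu>)" for k
    by (auto simp: A_def B_def J_def K_def sets_pair_measure_cong[OF sM sM])
  have dA: "disjoint_family_on A {..<M}" "disjoint_family_on B {..<M}"
  proof -
    have "J i \<inter> J j = {}" if "i \<noteq> j" for i j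
    proof (cases "i < j")
      case True
      hence "real (Suc i) * c \<le> real j * c" using assms(2) by (intro mult_right_mono) auto
      thus ?thesis by (auto simp: J_def)
    next
      case False
      hence "real (Suc j) * c \<le> real i * c" using assms(2) that by (intro mult_right_mono) auto
      thus ?thesis by (auto simp: J_def)
    qed
    thus "disjoint_family_on A {..<M}" "disjoint_family_on B {..<M}"
      by (auto simp: disjoint_family_on_def A_def B_def)
  qed
  have disj: "(\<Union>k\<in>{..<M}. A k) \<inter> (\<Union>k\<in>{..<M}. B k) = {}"
  proof -
    { fix i j u v assume i: "i < M" and j: "j < M" and u: "u \<in> K i" "u \<in> J j"
      have "real j * c < real M * c" "real i * c < real M * c" using i j assms(2) by auto
      hence "real (Suc j) * c \<le> real M * c" using j assms(2) by (intro mult_right_mono) auto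
      moreover have "real i * c \<le> real M * c" using i assms(2) by (intro mult_right_mono) auto
      ultimately have False using u assms(4) by (auto simp: J_def K_def) }
    thus ?thesis by (auto simp: A_def B_def)
  qed
  have sub: "(\<Union>k\<in>{..<M}. A k) \<union> (\<Union>k\<in>{..<M}. B k) \<subseteq> {p. fst p + snd p \<in> {x<..x+T}}"
  proof -
    { fix k u v assume "u \<in> K k" "v \<in> J k"
      hence "u + v \<in> {x<..x+T}" using assms(2,3)
        by (auto simp: J_def K_def algebra_simps) }
    thus ?thesis unfolding A_def B_def by (auto, metis add.commute, metis add.commute)
  qed
  have mA: "measure (\<mu> \<Otimes>\<^sub>M \<mu>) (A k) = measure \<mu> (J k) * measure \<mu> (K k)" for k
    using rect[OF assms(1,1), of "K k" "J k"] by (simp add: A_def J_def K_def)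
  have mB: "measure (\<mu> \<Otimes>\<^sub>M \<mu>) (B k) = measure \<mu> (J k) * measure \<mu> (K k)" for k
    using rect[OF assms(1,1), of "J k" "K k"] by (simp add: B_def J_def K_def)
  have "2 * (\<Sum>k<M. measure \<mu> (J k) * measure \<mu> (K k)) =
     measure (\<mu> \<Otimes>\<^sub>M \<mu>) (\<Union>k\<in>{..<M}. A k) + measure (\<mu> \<Otimes>\<^sub>M \<mu>) (\<Union>k\<in>{..<M}. B k)"
  proof -
    have "A ` {..<M} \<subseteq> sets (\<mu> \<Otimes>\<^sub>M \<mu>)" "B ` {..<M} \<subseteq> sets (\<mu> \<Otimes>\<^sub>M \<mu>)" using sA by auto
    thus ?thesis using P.finite_measure_finite_Union[of "{..<M}" A] P.finite_measure_finite_Union[of "{..<M}" B] dA mA mB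
      by simp
  qed
  also have "\<dots> = measure (\<mu> \<Otimes>\<^sub>M \<mu>) ((\<Union>k\<in>{..<M}. A k) \<union> (\<Union>k\<in>{..<M}. B k))"
    by (rule P.finite_measure_Union[symmetric]) (use sA disj in auto)
  also have "\<dots> \<le> measure (\<mu> \<Otimes>\<^sub>M \<mu>) {p. fst p + snd p \<in> {x<..x+T}}"
    by (rule P.finite_measure_mono[OF sub]) (rule conv_sets[OF assms(1,1)], simp)
  also have "\<dots> = measure (\<mu> \<star> \<mu>) {x<..x+T}" using conv_measure[OF assms(1,1)] by simp
  finally show ?thesis by (simp add: J_def K_def)
qed

lemma interval_split:
  assumes "is_distr M" "h \<ge> 0"
  shows "measure M {y<..y + real m * h} = (\<Sum>k<m. measure M {y + real k * h<..y + real k * h + h})"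
proof (induction m)
  case 0 then show ?case by simp
next
  case (Suc m)
  interpret prob_space M using assms by (simp add: is_distr_def)
  have sM: "sets M = sets borel" using assms by (simp add: is_distr_def)
  have "{y<..y + real (Suc m) * h} = {y<..y + real m * h} \<union> {y + real m * h<..y + real m * h + h}"
    proof -
    have hm: "0 \<le> h * real m" using assms(2) by simp
    show ?thesis using assms(2) hm by (auto simp: algebra_simps) (smt (verit) hm)
  qed
  hence "measure M {y<..y + real (Suc m) * h} = measure M {y<..y + real m * h} + measure M {y + real m * h<..y + real m * h + h}"
    using finite_measure_Union[of "{y<..y + real m * h}" "{y + real m * h<..y + real m * h + h}"] sM by auto
  then show ?case using Suc by simp
qed

lemma interval_split2:
  assumes "is_distr M" "h \<ge> 0"
  shows "measure M {0..<real m * h} = (\<Sum>k<m. measure M {real k * h..<real (Suc k) * h})"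
proof (induction m)
  case 0 then show ?case by simp
next
  case (Suc m)
  interpret prob_space M using assms by (simp add: is_distr_def)
  have sM: "sets M = sets borel" using assms by (simp add: is_distr_def)
  have "{0..<real (Suc m) * h} = {0..<real m * h} \<union> {real m * h..<real (Suc m) * h}"
    proof -
    have hm: "0 \<le> h * real m" using assms(2) by simp
    show ?thesis using assms(2) hm by (auto simp: algebra_simps) (smt (verit) hm)
  qed
  hence "measure M {0..<real (Suc m) * h} = measure M {0..<real m * h} + measure M {real m * h..<real (Suc m) * h}"
    using finite_measure_Union[of "{0..<real m * h}" "{real m * h..<real (Suc m) * h}"] sM by auto
  then show ?case using Suc by simp
qed

lemma I_meas:
  assumes "is_distr M" "T \<ge> 0"
  shows "(\<lambda>x. measure M {x<..x+T}) \<in> borel_measurable borel"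
proof -
  interpret prob_space M using assms by (simp add: is_distr_def)
  have sM: "sets M = sets borel" using assms by (simp add: is_distr_def)
  have eq: "measure M {x<..x+T} = measure M {..x+T} - measure M {..x}" for x
  proof -
    have "{x<..x+T} = {..x+T} - {..x}" using assms(2) by auto
    thus ?thesis using finite_measure_Diff[of "{..x+T}" "{..x}"] sM assms(2) by auto
  qed
  have m1: "mono (\<lambda>x. measure M {..x})"
    by (rule monoI, rule finite_measure_mono) (auto simp: sM)
  have m2: "mono (\<lambda>x. measure M {..x+T})"
    by (rule monoI, rule finite_measure_mono) (auto simp: sM)
  show ?thesis unfolding eq
    using borel_measurable_mono[OF m1] borel_measurable_mono[OF m2] by measurable
qed

lemma squeeze:
  fixes f :: "real \<Rightarrow> real"
  assumes "\<And>e. e > 0 \<Longrightarrow> \<exists>lo hi l h. (lo \<longlongrightarrow> l) at_top \<and> (hi \<longlongrightarrow> h) at_top \<and> 1 - e \<le> l \<and> h \<le> 1 + e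
            \<and> eventually (\<lambda>x. lo x \<le> f x \<and> f x \<le> hi x) at_top"
  shows "(f \<longlongrightarrow> 1) at_top"
proof (rule tendstoI)
  fix e :: real assume e: "e > 0"
  then obtain lo hi l h where lo: "(lo \<longlongrightarrow> l) at_top" and hi: "(hi \<longlongrightarrow> h) at_top" and
    l: "1 - e/2 \<le> l" and h: "h \<le> 1 + e/2" and ev: "eventually (\<lambda>x. lo x \<le> f x \<and> f x \<le> hi x) at_top"
    using assms[of "e/2"] by auto
  have "eventually (\<lambda>x. lo x > l - e/2) at_top" using lo e by (intro order_tendstoD) auto
  moreover have "eventually (\<lambda>x. hi x < h + e/2) at_top" using hi e by (intro order_tendstoD) auto
  ultimately show "eventually (\<lambda>x. dist (f x) 1 < e) at_top" using ev
    by eventually_elim (use l h in \<open>auto simp: dist_real_def abs_less_iff\<close>)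
qed

lemma ratio_m:
  assumes L: "class_L (\<lambda>x. measure M {x<..x+h})" and "is_distr M" "h \<ge> 0"
  shows "((\<lambda>x. measure M {x + b<..x + b + real m * h} / measure M {x<..x+h}) \<longlongrightarrow> real m) at_top"
proof -
  have lim: "((\<lambda>x. measure M {x + a<..x + a + h} / measure M {x<..x+h}) \<longlongrightarrow> 1) at_top" for a
    using L unfolding class_L_def by (simp add: add.assoc)
  have eq: "measure M {x + b<..x + b + real m * h} / measure M {x<..x+h} =
      (\<Sum>k<m. measure M {x + (b + real k * h)<..x + (b + real k * h) + h} / measure M {x<..x+h})" for x
    using interval_split[OF assms(2,3), of "x + b" m] by (simp add: sum_divide_distrib add.assoc)
  have "((\<lambda>x. \<Sum>k<m. measure M {x + (b + real k * h)<..x + (b + real k * h) + h} / measure M {x<..x+h}) \<longlongrightarrow> (\<Sum>k<m. 1)) at_top"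
    by (intro tendsto_sum lim)
  thus ?thesis unfolding eq by simp
qed

lemma pos_from_ratio:
  assumes "((\<lambda>x. F x / g x) \<longlongrightarrow> l) at_top" "l > 0" "eventually (\<lambda>x. g x > (0::real)) at_top"
  shows "eventually (\<lambda>x. F x > 0) at_top"
proof -
  have "eventually (\<lambda>x. F x / g x > 0) at_top" using assms(1,2) by (intro order_tendstoD) auto
  with assms(3) show ?thesis by eventually_elim (auto simp: zero_less_divide_iff)
qed

lemma nu_exists:
  assumes mu: "is_distr \<mu>" and hyp: "\<forall>c>0. \<exists>\<rho>. is_distr \<rho> \<and> measure \<rho> {0..c} = 1 \<and> S_loc (\<rho> \<star> \<mu>)"
  and c: "c > 0"
  shows "\<exists>\<nu>. is_distr \<nu> \<and> S_loc \<nu> \<and> (\<forall>x T. measure \<mu> {x<..x+T} \<le> measure \<nu> {x<..x+T+c})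
     \<and> (\<forall>x T. measure \<nu> {x+c<..x+T} \<le> measure \<mu> {x<..x+T})
     \<and> (\<forall>x T. measure (\<mu> \<star> \<mu>) {x<..x+T} \<le> measure (\<nu> \<star> \<nu>) {x<..x+T+2*c})"
proof -
  obtain \<rho> where r: "is_distr \<rho>" "measure \<rho> {0..c} = 1" "S_loc (\<rho> \<star> \<mu>)" using hyp c by blast
  have nu: "is_distr (\<rho> \<star> \<mu>)" using conv_distr[OF r(1) mu] .
  have mm: "is_distr (\<mu> \<star> \<mu>)" using conv_distr[OF mu mu] .
  have rmm: "is_distr (\<rho> \<star> (\<mu> \<star> \<mu>))" using conv_distr[OF r(1) mm] .
  have fin: "finite_measure \<rho>" "finite_measure \<mu>" using r(1) mu
    by (auto simp: is_distr_def prob_space.finite_measure)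
  have sr: "sets \<rho> = sets borel" and sm: "sets \<mu> = sets borel" using r(1) mu by (auto simp: is_distr_def)
  have finnu: "finite_measure (\<rho> \<star> \<mu>)" using nu by (auto simp: is_distr_def prob_space.finite_measure)
  have eq: "((\<rho> \<star> \<mu>) \<star> (\<rho> \<star> \<mu>)) = (\<rho> \<star> (\<rho> \<star> (\<mu> \<star> \<mu>)))"
  proof -
    have "((\<rho> \<star> \<mu>) \<star> (\<rho> \<star> \<mu>)) = (\<rho> \<star> (\<mu> \<star> (\<rho> \<star> \<mu>)))"
      using convolution_associative[OF fin(2) finnu fin(1)] sr sm by simp
    also have "(\<mu> \<star> (\<rho> \<star> \<mu>)) = ((\<mu> \<star> \<rho>) \<star> \<mu>)"
      using convolution_associative[OF fin(1) fin(2) fin(2)] sr sm by simp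
    also have "(\<mu> \<star> \<rho>) = (\<rho> \<star> \<mu>)" using convolution_commutative[OF fin(2) fin(1)] sr sm by simp
    also have "((\<rho> \<star> \<mu>) \<star> \<mu>) = (\<rho> \<star> (\<mu> \<star> \<mu>))"
      using convolution_associative[OF fin(2) fin(2) fin(1)] sr sm by simp
    finally show ?thesis .
  qed
  show ?thesis
  proof (intro exI[of _ "\<rho> \<star> \<mu>"] conjI allI)
    fix x T
    show "measure \<mu> {x<..x+T} \<le> measure (\<rho> \<star> \<mu>) {x<..x+T+c}"
      by (rule conv_lower[OF r(1) mu r(2)]) auto
    show "measure (\<rho> \<star> \<mu>) {x+c<..x+T} \<le> measure \<mu> {x<..x+T}"
      by (rule conv_upper[OF r(1) mu r(2)]) auto
    have "measure (\<mu> \<star> \<mu>) {x<..x+T} \<le> measure (\<rho> \<star> (\<mu> \<star> \<mu>)) {x<..x+T+c}"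
      by (rule conv_lower[OF r(1) mm r(2)]) auto
    also have "\<dots> \<le> measure (\<rho> \<star> (\<rho> \<star> (\<mu> \<star> \<mu>))) {x<..x+T+2*c}"
      by (rule conv_lower[OF r(1) rmm r(2)]) auto
    finally show "measure (\<mu> \<star> \<mu>) {x<..x+T} \<le> measure ((\<rho> \<star> \<mu>) \<star> (\<rho> \<star> \<mu>)) {x<..x+T+2*c}"
      unfolding eq .
  qed (use nu r(3) in auto)
qed

lemma numN:
  fixes e :: real assumes e: "e > 0"
  defines "n \<equiv> real (nat \<lceil>3/e\<rceil> + 2)"
  shows "n \<ge> 2" "1 - e \<le> (n - 1)/(n + 1)" "(n + 1)/(n - 1) \<le> 1 + e"
    "(n + 2)/(n - 1) \<le> 1 + e" "1 - e/2 \<le> (n - 1)/n"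
proof -
  have "3/e \<le> real (nat \<lceil>3/e\<rceil>)" by linarith
  hence n3: "3/e \<le> n - 2" unfolding n_def by simp
  hence en: "3 \<le> e * (n - 2)" using e by (simp add: pos_divide_le_eq mult.commute)
  show n2: "n \<ge> 2" unfolding n_def by simp
  have "e * (n - 2) \<le> e * (n + 1)" "e * (n - 2) \<le> e * (n - 1)" "e * (n - 2) \<le> e * n" using e by auto
  hence a: "3 \<le> e * (n + 1)" "3 \<le> e * (n - 1)" "3 \<le> e * n" using en by linarith+
  show "1 - e \<le> (n - 1)/(n + 1)" using n2 a(1) by (simp add: le_divide_eq algebra_simps)
  show "(n + 1)/(n - 1) \<le> 1 + e" using n2 a(2) by (simp add: divide_le_eq algebra_simps)
  show "(n + 2)/(n - 1) \<le> 1 + e" using n2 a(2) by (simp add: divide_le_eq algebra_simps)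
  show "1 - e/2 \<le> (n - 1)/n" using n2 a(3) by (simp add: le_divide_eq algebra_simps)
qed

lemma mu_pos:
  assumes mu: "is_distr \<mu>" and hyp: "\<forall>c>0. \<exists>\<rho>. is_distr \<rho> \<and> measure \<rho> {0..c} = 1 \<and> S_loc (\<rho> \<star> \<mu>)"
  and T: "T > 0"
  shows "eventually (\<lambda>x. measure \<mu> {x<..x+T} > 0) at_top"
proof -
  define c where "c = T/2"
  have c: "c > 0" using T by (simp add: c_def)
  obtain \<nu> where nu: "is_distr \<nu>" "S_loc \<nu>" "\<forall>x T. measure \<nu> {x+c<..x+T} \<le> measure \<mu> {x<..x+T}"
    using nu_exists[OF mu hyp c] by blast
  have "class_L (\<lambda>x. measure \<nu> {x<..x+c})" using nu(2) c by (simp add: S_loc_def S_Delta_def L_Delta_def)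
  hence "eventually (\<lambda>x. measure \<nu> {x<..x+c} > 0) at_top" by (simp add: class_L_def)
  then obtain X where X: "\<And>x. x \<ge> X \<Longrightarrow> measure \<nu> {x<..x+c} > 0" by (auto simp: eventually_at_top_linorder)
  show ?thesis unfolding eventually_at_top_linorder
  proof (intro exI[of _ X] allI impI)
    fix x assume "x \<ge> X"
    hence "measure \<nu> {x+c<..x+c+c} > 0" using X[of "x+c"] c by simp
    moreover have "x + c + c = x + T" by (simp add: c_def)
    ultimately show "measure \<mu> {x<..x+T} > 0" using nu(3) by (metis order.strict_trans2)
  qed
qed

lemma lim_ratio2:
  fixes A B g :: "real \<Rightarrow> real"
  assumes "((\<lambda>x. A x / g x) \<longlongrightarrow> a) at_top" "((\<lambda>x. B x / g x) \<longlongrightarrow> b) at_top" "b \<noteq> 0"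
    "eventually (\<lambda>x. g x > 0) at_top"
  shows "((\<lambda>x. A x / B x) \<longlongrightarrow> a / b) at_top"
proof -
  have "((\<lambda>x. (A x / g x) / (B x / g x)) \<longlongrightarrow> a / b) at_top" using assms by (intro tendsto_divide) auto
  moreover have "eventually (\<lambda>x. (A x / g x) / (B x / g x) = A x / B x) at_top"
    using assms(4) by eventually_elim simp
  ultimately show ?thesis by (rule Lim_transform_eventually)
qed

lemma mu_L:
  assumes mu: "is_distr \<mu>" and hyp: "\<forall>c>0. \<exists>\<rho>. is_distr \<rho> \<and> measure \<rho> {0..c} = 1 \<and> S_loc (\<rho> \<star> \<mu>)"
  and T: "T > 0"
  shows "class_L (\<lambda>x. measure \<mu> {x<..x+T})"
  unfolding class_L_def
proof (intro conjI allI)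
  show "(\<lambda>x. measure \<mu> {x<..x+T}) \<in> borel_measurable borel" using I_meas[OF mu] T by simp
  show "eventually (\<lambda>x. measure \<mu> {x<..x+T} > 0) at_top" using mu_pos[OF mu hyp T] .
  show "0 \<le> measure \<mu> {x<..x+T}" for x by simp
  fix a
  show "((\<lambda>x. measure \<mu> {x + a<..x + a + T} / measure \<mu> {x<..x+T}) \<longlongrightarrow> 1) at_top"
  proof (rule squeeze)
    fix e :: real assume e: "e > 0"
    define N where "N = nat \<lceil>3/e\<rceil> + 2"
    define n where "n = real N"
    have nn: "n \<ge> 2" "1 - e \<le> (n - 1)/(n + 1)" "(n + 1)/(n - 1) \<le> 1 + e"
      using numN[OF e] unfolding n_def N_def by auto
    define c where "c = T / n"
    have c: "c > 0" using nn T by (simp add: c_def)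
    have Tc: "T = n * c" using nn by (simp add: c_def)
    have N1: "real (N - 1) = n - 1" "real (N + 1) = n + 1" using nn by (auto simp: n_def of_nat_diff)
    obtain \<nu> where nu: "is_distr \<nu>" "S_loc \<nu>" "\<forall>x T. measure \<mu> {x<..x+T} \<le> measure \<nu> {x<..x+T+c}"
      "\<forall>x T. measure \<nu> {x+c<..x+T} \<le> measure \<mu> {x<..x+T}"
      using nu_exists[OF mu hyp c] by blast
    define g where "g x = measure \<nu> {x<..x+c}" for x
    have Lg: "class_L (\<lambda>x. measure \<nu> {x<..x+c})" using nu(2) c by (simp add: S_loc_def S_Delta_def L_Delta_def)
    hence gpos: "eventually (\<lambda>x. g x > 0) at_top" by (simp add: class_L_def g_def)
    define A where "A x = measure \<nu> {x + (a + c)<..x + (a + c) + real (N - 1) * c}" for x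
    define B where "B x = measure \<nu> {x + 0<..x + 0 + real (N + 1) * c}" for x
    define A' where "A' x = measure \<nu> {x + a<..x + a + real (N + 1) * c}" for x
    define B' where "B' x = measure \<nu> {x + c<..x + c + real (N - 1) * c}" for x
    have rA: "((\<lambda>x. A x / g x) \<longlongrightarrow> n - 1) at_top"
      using ratio_m[OF Lg nu(1), of "a + c" "N - 1"] c N1 by (simp add: A_def g_def)
    have rB: "((\<lambda>x. B x / g x) \<longlongrightarrow> n + 1) at_top"
      using ratio_m[OF Lg nu(1), of 0 "N + 1"] c N1 by (simp add: B_def g_def add.commute)
    have rA': "((\<lambda>x. A' x / g x) \<longlongrightarrow> n + 1) at_top"
      using ratio_m[OF Lg nu(1), of a "N + 1"] c N1 by (simp add: A'_def g_def add.commute)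
    have rB': "((\<lambda>x. B' x / g x) \<longlongrightarrow> n - 1) at_top"
      using ratio_m[OF Lg nu(1), of c "N - 1"] c N1 by (simp add: B'_def g_def)
    have B'pos: "eventually (\<lambda>x. B' x > 0) at_top"
      by (rule pos_from_ratio[OF rB' _ gpos]) (use nn in auto)
    have bA: "A x \<le> measure \<mu> {x + a<..x + a + T}" for x
      using nu(4)[rule_format, of "x + a" T] unfolding A_def N1 Tc by (simp add: algebra_simps)
    have bB: "measure \<mu> {x<..x + T} \<le> B x" for x
      using nu(3)[rule_format, of x T] unfolding B_def N1 Tc by (simp add: algebra_simps)
    have bA': "measure \<mu> {x + a<..x + a + T} \<le> A' x" for x
      using nu(3)[rule_format, of "x + a" T] unfolding A'_def N1 Tc by (simp add: algebra_simps)
    have bB': "B' x \<le> measure \<mu> {x<..x + T}" for x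
      using nu(4)[rule_format, of x T] unfolding B'_def N1 Tc by (simp add: algebra_simps)
    show "\<exists>lo hi l h. (lo \<longlongrightarrow> l) at_top \<and> (hi \<longlongrightarrow> h) at_top \<and> 1 - e \<le> l \<and> h \<le> 1 + e \<and>
        eventually (\<lambda>x. lo x \<le> measure \<mu> {x + a<..x + a + T} / measure \<mu> {x<..x+T} \<and>
                        measure \<mu> {x + a<..x + a + T} / measure \<mu> {x<..x+T} \<le> hi x) at_top"
    proof (intro exI conjI)
      show "((\<lambda>x. A x / B x) \<longlongrightarrow> (n - 1) / (n + 1)) at_top"
        by (rule lim_ratio2[OF rA rB _ gpos]) (use nn in auto)
      show "((\<lambda>x. A' x / B' x) \<longlongrightarrow> (n + 1) / (n - 1)) at_top"
        by (rule lim_ratio2[OF rA' rB' _ gpos]) (use nn in auto)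
      show "1 - e \<le> (n - 1) / (n + 1)" "(n + 1) / (n - 1) \<le> 1 + e" using nn by auto
      show "eventually (\<lambda>x. A x / B x \<le> measure \<mu> {x + a<..x + a + T} / measure \<mu> {x<..x+T} \<and>
                        measure \<mu> {x + a<..x + a + T} / measure \<mu> {x<..x+T} \<le> A' x / B' x) at_top"
        using B'pos
      proof eventually_elim
        case (elim x)
        have p: "0 < measure \<mu> {x<..x+T}" using elim bB'[of x] by linarith
        have A0: "0 \<le> A x" by (simp add: A_def)
        show ?case
        proof
          show "A x / B x \<le> measure \<mu> {x + a<..x + a + T} / measure \<mu> {x<..x+T}"
            by (rule frac_le) (use A0 bA p bB in auto)
          show "measure \<mu> {x + a<..x + a + T} / measure \<mu> {x<..x+T} \<le> A' x / B' x"
            by (rule frac_le) (use bA' elim bB' in \<open>auto simp: A'_def\<close>)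
        qed
      qed
    qed
  qed
qed

lemma mass_approx:
  assumes mu: "is_distr \<mu>" and mu0: "measure \<mu> {0..} = 1" and c: "c > 0" and e: "e > 0"
  shows "\<exists>M. measure \<mu> {0..<real M * c} > 1 - e"
proof -
  interpret prob_space \<mu> using mu by (simp add: is_distr_def)
  have sM: "sets \<mu> = sets borel" using mu by (simp add: is_distr_def)
  define A where "A M = {0..<real M * c}" for M :: nat
  have inc: "incseq A"
  proof (rule monoI)
    fix i j :: nat assume "i \<le> j"
    hence "real i * c \<le> real j * c" using c by (intro mult_right_mono) auto
    thus "A i \<subseteq> A j" unfolding A_def by auto
  qed
  have U: "(\<Union>M. A M) = {0..}"
  proof (intro equalityI subsetI)
    fix x assume "x \<in> (\<Union>M. A M)" thus "x \<in> {0..}" by (auto simp: A_def)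
  next
    fix x :: real assume "x \<in> {0..}"
    hence x: "0 \<le> x" by simp
    obtain M :: nat where "x / c < real M" using reals_Archimedean2 by blast
    hence "x < real M * c" using c by (simp add: pos_divide_less_eq)
    hence "x \<in> A M" using x by (simp add: A_def)
    thus "x \<in> (\<Union>M. A M)" by blast
  qed
  have r: "range A \<subseteq> sets \<mu>" by (simp add: A_def sM image_subset_iff)
  have "(\<lambda>M. measure \<mu> (A M)) \<longlonglongrightarrow> measure \<mu> (\<Union>M. A M)"
    by (rule Lim_measure_incseq[OF r inc]) (simp add: emeasure_eq_measure)
  hence "(\<lambda>M. measure \<mu> (A M)) \<longlonglongrightarrow> 1" using U mu0 by simp
  hence "eventually (\<lambda>M. measure \<mu> (A M) > 1 - e) sequentially" using e by (intro order_tendstoD) auto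
  then obtain M where "measure \<mu> (A M) > 1 - e" by (auto simp: eventually_sequentially)
  thus ?thesis unfolding A_def by blast
qed

lemma mu_S:
  assumes mu: "is_distr \<mu>" and mu0: "measure \<mu> {0..} = 1"
  and hyp: "\<forall>c>0. \<exists>\<rho>. is_distr \<rho> \<and> measure \<rho> {0..c} = 1 \<and> S_loc (\<rho> \<star> \<mu>)"
  and T: "T > 0"
  shows "((\<lambda>x. measure (\<mu> \<star> \<mu>) {x<..x+T} / (2 * measure \<mu> {x<..x+T})) \<longlongrightarrow> 1) at_top"
proof (rule squeeze)
  fix e :: real assume e: "e > 0"
  define N where "N = nat \<lceil>3/e\<rceil> + 2"
  define n where "n = real N"
  have nn: "n \<ge> 2" "(n + 2)/(n - 1) \<le> 1 + e" "1 - e/2 \<le> (n - 1)/n"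
    using numN[OF e] unfolding n_def N_def by auto
  define c where "c = T / n"
  have c: "c > 0" using nn T by (simp add: c_def)
  have Tc: "T = n * c" using nn by (simp add: c_def)
  have N1: "real (N - 1) = n - 1" "real (N + 2) = n + 2" "real N = n" using nn by (auto simp: n_def of_nat_diff)
  obtain \<nu> where nu: "is_distr \<nu>" "S_loc \<nu>"
      "\<forall>x T. measure \<nu> {x+c<..x+T} \<le> measure \<mu> {x<..x+T}"
      "\<forall>x T. measure (\<mu> \<star> \<mu>) {x<..x+T} \<le> measure (\<nu> \<star> \<nu>) {x<..x+T+2*c}"
    using nu_exists[OF mu hyp c] by blast
  obtain M where M: "measure \<mu> {0..<real M * c} > 1 - e/2" using mass_approx[OF mu mu0 c, of "e/2"] e by auto
  define T2 where "T2 = real (N + 2) * c"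
  have T2: "T2 > 0" using c by (simp add: T2_def)
  define g where "g x = measure \<nu> {x<..x+c}" for x
  have Lg: "class_L (\<lambda>x. measure \<nu> {x<..x+c})" using nu(2) c by (simp add: S_loc_def S_Delta_def L_Delta_def)
  hence gpos: "eventually (\<lambda>x. g x > 0) at_top" by (simp add: class_L_def g_def)
  have SD: "((\<lambda>x. measure (\<nu> \<star> \<nu>) {x<..x + T2} / (2 * measure \<nu> {x<..x + T2})) \<longlongrightarrow> 1) at_top"
    using nu(2) T2 by (simp add: S_loc_def S_Delta_def)
  define B' where "B' x = measure \<nu> {x + c<..x + c + real (N - 1) * c}" for x
  define V where "V x = measure \<nu> {x + 0<..x + 0 + real (N + 2) * c}" for x
  have rB': "((\<lambda>x. B' x / g x) \<longlongrightarrow> n - 1) at_top"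
    using ratio_m[OF Lg nu(1), of c "N - 1"] c N1 by (simp add: B'_def g_def)
  have rV: "((\<lambda>x. V x / g x) \<longlongrightarrow> n + 2) at_top"
    using ratio_m[OF Lg nu(1), of 0 "N + 2"] c N1 by (simp add: V_def g_def add.commute)
  have B'pos: "eventually (\<lambda>x. B' x > 0) at_top"
    by (rule pos_from_ratio[OF rB' _ gpos]) (use nn in auto)
  have Vpos: "eventually (\<lambda>x. V x > 0) at_top"
    by (rule pos_from_ratio[OF rV _ gpos]) (use nn in auto)
  have V_eq: "V x = measure \<nu> {x<..x + T2}" for x by (simp add: V_def T2_def)
  define hi where "hi x = measure (\<nu> \<star> \<nu>) {x<..x + T2} / (2 * B' x)" for x
  have hi_lim: "(hi \<longlongrightarrow> 1 * ((n + 2) / (n - 1))) at_top"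
  proof -
    have "((\<lambda>x. measure (\<nu> \<star> \<nu>) {x<..x + T2} / (2 * measure \<nu> {x<..x + T2}) * ((V x / g x) / (B' x / g x)))
        \<longlongrightarrow> 1 * ((n + 2) / (n - 1))) at_top"
      by (intro tendsto_mult SD tendsto_divide rV rB') (use nn in auto)
    moreover have "eventually (\<lambda>x. measure (\<nu> \<star> \<nu>) {x<..x + T2} / (2 * measure \<nu> {x<..x + T2}) * ((V x / g x) / (B' x / g x)) = hi x) at_top"
      using gpos Vpos by eventually_elim (simp add: hi_def V_eq)
    ultimately show ?thesis by (rule Lim_transform_eventually)
  qed
  have Lmu: "class_L (\<lambda>x. measure \<mu> {x<..x+c})" using mu_L[OF mu hyp c] .
  hence gmpos: "eventually (\<lambda>x. measure \<mu> {x<..x+c} > 0) at_top" by (simp add: class_L_def)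
  define J where "J k = measure \<mu> {real k * c..<real (Suc k) * c}" for k :: nat
  define K where "K k x = measure \<mu> {x + - (real k * c)<..x + - (real k * c) + real (N - 1) * c}" for k x
  define D where "D x = measure \<mu> {x + 0<..x + 0 + real N * c}" for x
  have rK: "((\<lambda>x. K k x / measure \<mu> {x<..x+c}) \<longlongrightarrow> n - 1) at_top" for k
    using ratio_m[OF Lmu mu, of "- (real k * c)" "N - 1"] c N1 by (simp add: K_def)
  have rD: "((\<lambda>x. D x / measure \<mu> {x<..x+c}) \<longlongrightarrow> n) at_top"
    using ratio_m[OF Lmu mu, of 0 N] c N1 by (simp add: D_def)
  have D_eq: "D x = measure \<mu> {x<..x + T}" for x by (simp add: D_def Tc N1)
  define lo where "lo x = (\<Sum>k<M. J k * (K k x / D x))" for x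
  have lo_lim: "(lo \<longlongrightarrow> (\<Sum>k<M. J k * ((n - 1) / n))) at_top"
    unfolding lo_def
    by (intro tendsto_sum tendsto_mult_left lim_ratio2[OF rK rD _ gmpos]) (use nn in auto)
  have p: "(\<Sum>k<M. J k) = measure \<mu> {0..<real M * c}"
    using interval_split2[OF mu, of c M] c by (simp add: J_def)
  have mupos: "eventually (\<lambda>x. measure \<mu> {x<..x+T} > 0) at_top" using mu_pos[OF mu hyp T] .
  show "\<exists>lo hi l h. (lo \<longlongrightarrow> l) at_top \<and> (hi \<longlongrightarrow> h) at_top \<and> 1 - e \<le> l \<and> h \<le> 1 + e \<and>
        eventually (\<lambda>x. lo x \<le> measure (\<mu> \<star> \<mu>) {x<..x+T} / (2 * measure \<mu> {x<..x+T}) \<and>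
                        measure (\<mu> \<star> \<mu>) {x<..x+T} / (2 * measure \<mu> {x<..x+T}) \<le> hi x) at_top"
  proof (intro exI conjI)
    show "(lo \<longlongrightarrow> (\<Sum>k<M. J k * ((n - 1) / n))) at_top" by (rule lo_lim)
    show "(hi \<longlongrightarrow> 1 * ((n + 2) / (n - 1))) at_top" by (rule hi_lim)
    show "1 * ((n + 2) / (n - 1)) \<le> 1 + e" using nn by simp
    show "1 - e \<le> (\<Sum>k<M. J k * ((n - 1) / n))"
    proof -
      have "(\<Sum>k<M. J k * ((n - 1) / n)) = measure \<mu> {0..<real M * c} * ((n - 1) / n)"
        unfolding p[symmetric] by (rule sum_distrib_right[symmetric])
      moreover
      define P where "P = measure \<mu> {0..<real M * c}"
      define q where "q = (n - 1) / n"
      have P0: "P \<ge> 0" and P: "P > 1 - e/2" using M by (auto simp: P_def)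
      have q: "q \<ge> 1 - e/2" "q \<ge> 0" using nn by (auto simp: q_def)
      have "1 - e \<le> P * q"
      proof (cases "1 - e/2 \<ge> 0")
        case True
        have "(1 - e/2) * (1 - e/2) \<le> P * q" using True P q by (intro mult_mono) auto
        moreover have "1 - e \<le> (1 - e/2) * (1 - e/2)" by (simp add: algebra_simps power2_eq_square)
        ultimately show ?thesis by linarith
      next
        case False
        have "0 \<le> P * q" using P0 q by simp
        thus ?thesis using False by linarith
      qed
      ultimately show ?thesis by (simp add: P_def q_def)
    qed
    show "eventually (\<lambda>x. lo x \<le> measure (\<mu> \<star> \<mu>) {x<..x+T} / (2 * measure \<mu> {x<..x+T}) \<and>
                        measure (\<mu> \<star> \<mu>) {x<..x+T} / (2 * measure \<mu> {x<..x+T}) \<le> hi x) at_top"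
      using mupos B'pos eventually_ge_at_top[of "2 * real M * c"]
    proof eventually_elim
      case (elim x)
      have bB': "B' x \<le> measure \<mu> {x<..x + T}"
        using nu(3)[rule_format, of x T] unfolding B'_def N1 Tc by (simp add: algebra_simps)
      have bV: "measure (\<mu> \<star> \<mu>) {x<..x+T} \<le> measure (\<nu> \<star> \<nu>) {x<..x + T2}"
        using nu(4)[rule_format, of x T] unfolding T2_def N1 Tc by (simp add: algebra_simps)
      have low: "2 * (\<Sum>k<M. measure \<mu> {real k * c..<real (Suc k) * c} * measure \<mu> {x - real k * c<..x - real k * c + (T - c)})
           \<le> measure (\<mu> \<star> \<mu>) {x<..x+T}"
        by (rule conv_self_lower[OF mu c]) (use nn Tc c elim in \<open>auto intro: mult_right_mono\<close>)
      have Keq: "measure \<mu> {x - real k * c<..x - real k * c + (T - c)} = K k x" for k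
        unfolding K_def N1 Tc by (simp add: algebra_simps)
      have "lo x = (\<Sum>k<M. J k * K k x) / measure \<mu> {x<..x+T}"
        unfolding lo_def D_eq by (simp add: sum_divide_distrib)
      also have "\<dots> = (2 * (\<Sum>k<M. J k * K k x)) / (2 * measure \<mu> {x<..x+T})" by simp
      also have "\<dots> \<le> measure (\<mu> \<star> \<mu>) {x<..x+T} / (2 * measure \<mu> {x<..x+T})"
        using low elim(1) unfolding Keq J_def by (intro divide_right_mono) auto
      finally have 1: "lo x \<le> measure (\<mu> \<star> \<mu>) {x<..x+T} / (2 * measure \<mu> {x<..x+T})" .
      have 2: "measure (\<mu> \<star> \<mu>) {x<..x+T} / (2 * measure \<mu> {x<..x+T}) \<le> hi x"
        unfolding hi_def by (rule frac_le) (use bV elim bB' in auto)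
      show ?case using 1 2 by simp
    qed
  qed
qed

theorem proposition1p1:
  fixes \<mu> :: "real measure"
  assumes "is_distr \<mu>" and "measure \<mu> {0..} = 1"
    and "\<forall>c>0. \<exists>\<rho>. is_distr \<rho> \<and> measure \<rho> {0..c} = 1 \<and> S_loc (\<rho> \<star> \<mu>)"
  shows "S_loc \<mu>"
  unfolding S_loc_def S_Delta_def L_Delta_def
  using mu_L[OF assms(1) assms(3)] mu_S[OF assms] by auto

end
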